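(* Let $(G_1,v_1)$ and $(G_2,v_2)$ be Brill–Noether general once-marked graphs of genera $g_1,g_2$, and let $G$ be the graph of genus $g=g_1+g_2$ obtained from the disjoint union of $G_1$ and $G_2$ by identifying $v_1$ with $v_2$. Then $G$ is Brill–Noether general.
   Context: A graph is a finite, connected, loopless multigraph (parallel edges allowed); its genus is $g=|E(G)|-|V(G)|+1$. A divisor is an element of the free abelian group on $V(G)$. Linear equivalence is generated by chip-firing (firing $w$ subtracts $\mathrm{val}(w)$ chips from $w$ and adds to each other vertex the number of edges joining it to $w$). The rank $r(D)$ is $-1$ if $D$ is not equivalent to an effective divisor, else the largest $r\ge0$ such that $D-E$ is equivalent to an effective divisor for every effective $E$ of degree $r$. A graph $G$ of genus $g$ is Brill–Noether general if for every divisor $D$ and every integer $r$ with $0\le r\le r(D)$, $g-(r+1)(g-\deg D+r)\ge0$. For a vertex $v$ and divisor $D$ on a genus-$g$ graph, $s_i(D,v)=\min\{\ell\in\mathbb Z: r(D+\ell v)\ge i\}$ and $\lambda_i(D,v)=i-s_i(D,v)+g-\deg D$ for $i\ge0$; the Weierstrass partition $\lambda(D,v)=(\lambda_0,\lambda_1,\dots)$ is a nonincreasing sequence of nonnegative integers, finitely many nonzero, and $|\lambda(D,v)|=\sum_i\lambda_i(D,v)$. A once-marked graph $(G,v)$ of genus $g$ is Brill–Noether general if $|\lambda(D,v)|\le g$ for every divisor $D$ on $G$. *)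

theory Defs
  imports Main
begin

definition adj_rel :: "'a set \<Rightarrow> ('a \<Rightarrow> 'a \<Rightarrow> nat) \<Rightarrow> ('a \<times> 'a) set" where
  "adj_rel V m = {(a, b). a \<in> V \<and> b \<in> V \<and> m a b > 0}"

definition is_graph :: "'a set \<Rightarrow> ('a \<Rightarrow> 'a \<Rightarrow> nat) \<Rightarrow> bool" where
  "is_graph V m \<longleftrightarrow> finite V \<and> V \<noteq> {}
     \<and> (\<forall>x y. m x y = m y x)
     \<and> (\<forall>x. m x x = 0)
     \<and> (\<forall>x y. x \<notin> V \<longrightarrow> m x y = 0)
     \<and> (\<forall>x\<in>V. \<forall>y\<in>V. (x, y) \<in> (adj_rel V m)\<^sup>*)"

definition num_edges :: "'a set \<Rightarrow> ('a \<Rightarrow> 'a \<Rightarrow> nat) \<Rightarrow> nat" where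
  "num_edges V m = (\<Sum>x\<in>V. \<Sum>y\<in>V. m x y) div 2"

definition genus :: "'a set \<Rightarrow> ('a \<Rightarrow> 'a \<Rightarrow> nat) \<Rightarrow> int" where
  "genus V m = int (num_edges V m) - int (card V) + 1"

definition valence :: "'a set \<Rightarrow> ('a \<Rightarrow> 'a \<Rightarrow> nat) \<Rightarrow> 'a \<Rightarrow> nat" where
  "valence V m w = (\<Sum>u\<in>V. m w u)"

definition divisor :: "'a set \<Rightarrow> ('a \<Rightarrow> int) \<Rightarrow> bool" where
  "divisor V D \<longleftrightarrow> (\<forall>x. x \<notin> V \<longrightarrow> D x = 0)"

definition deg :: "'a set \<Rightarrow> ('a \<Rightarrow> int) \<Rightarrow> int" where
  "deg V D = (\<Sum>x\<in>V. D x)"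

definition effective :: "'a set \<Rightarrow> ('a \<Rightarrow> int) \<Rightarrow> bool" where
  "effective V D \<longleftrightarrow> (\<forall>x\<in>V. D x \<ge> 0)"

text \<open>Firing the vertices according to the script f (f w = number of times w fires,
possibly negative) changes D into D - laplacian f.  Firing w once alone subtracts
valence w chips from w and adds m u w chips to every other vertex u.\<close>

definition laplacian :: "'a set \<Rightarrow> ('a \<Rightarrow> 'a \<Rightarrow> nat) \<Rightarrow> ('a \<Rightarrow> int) \<Rightarrow> 'a \<Rightarrow> int" where
  "laplacian V m f u = (\<Sum>w\<in>V. int (m u w) * (f u - f w))"

definition lin_equiv :: "'a set \<Rightarrow> ('a \<Rightarrow> 'a \<Rightarrow> nat) \<Rightarrow> ('a \<Rightarrow> int) \<Rightarrow> ('a \<Rightarrow> int) \<Rightarrow> bool" where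
  "lin_equiv V m D D' \<longleftrightarrow> (\<exists>f. D' = (\<lambda>u. D u - laplacian V m f u))"

definition winnable :: "'a set \<Rightarrow> ('a \<Rightarrow> 'a \<Rightarrow> nat) \<Rightarrow> ('a \<Rightarrow> int) \<Rightarrow> bool" where
  "winnable V m D \<longleftrightarrow> (\<exists>D'. lin_equiv V m D D' \<and> effective V D')"

definition rank :: "'a set \<Rightarrow> ('a \<Rightarrow> 'a \<Rightarrow> nat) \<Rightarrow> ('a \<Rightarrow> int) \<Rightarrow> int" where
  "rank V m D = (if \<not> winnable V m D then -1
     else int (GREATEST r::nat. \<forall>E. divisor V E \<and> effective V E \<and> deg V E = int r
                 \<longrightarrow> winnable V m (\<lambda>x. D x - E x)))"

definition BN_general :: "'a set \<Rightarrow> ('a \<Rightarrow> 'a \<Rightarrow> nat) \<Rightarrow> bool" where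
  "BN_general V m \<longleftrightarrow> (\<forall>D. divisor V D \<longrightarrow> (\<forall>r::int. 0 \<le> r \<and> r \<le> rank V m D \<longrightarrow>
      genus V m - (r + 1) * (genus V m - deg V D + r) \<ge> 0))"

definition s_idx :: "'a set \<Rightarrow> ('a \<Rightarrow> 'a \<Rightarrow> nat) \<Rightarrow> ('a \<Rightarrow> int) \<Rightarrow> 'a \<Rightarrow> nat \<Rightarrow> int" where
  "s_idx V m D v i = (LEAST l::int. rank V m (\<lambda>x. D x + (if x = v then l else 0)) \<ge> int i)"

definition lambda_idx :: "'a set \<Rightarrow> ('a \<Rightarrow> 'a \<Rightarrow> nat) \<Rightarrow> ('a \<Rightarrow> int) \<Rightarrow> 'a \<Rightarrow> nat \<Rightarrow> int" where
  "lambda_idx V m D v i = int i - s_idx V m D v i + genus V m - deg V D"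

text \<open>|lambda(D,v)| \<le> g, expressed as: every partial sum of the (nonnegative,
eventually zero) Weierstrass partition is at most g.\<close>

definition marked_BN_general :: "'a set \<Rightarrow> ('a \<Rightarrow> 'a \<Rightarrow> nat) \<Rightarrow> 'a \<Rightarrow> bool" where
  "marked_BN_general V m v \<longleftrightarrow> v \<in> V \<and> (\<forall>D. divisor V D \<longrightarrow>
      (\<forall>n. (\<Sum>i<n. lambda_idx V m D v i) \<le> genus V m))"

text \<open>Wedge sum: disjoint union of G1 and G2 with v1 and v2 identified.  The
identified vertex is represented by Inl v1; Inr v2 is not a vertex.\<close>

definition wedge_vertices :: "'a set \<Rightarrow> 'a \<Rightarrow> 'b set \<Rightarrow> 'b \<Rightarrow> ('a + 'b) set" where
  "wedge_vertices V1 v1 V2 v2 = Inl ` V1 \<union> Inr ` (V2 - {v2})"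

definition wedge_edges :: "('a \<Rightarrow> 'a \<Rightarrow> nat) \<Rightarrow> 'a \<Rightarrow> ('b \<Rightarrow> 'b \<Rightarrow> nat) \<Rightarrow> 'b
     \<Rightarrow> ('a + 'b) \<Rightarrow> ('a + 'b) \<Rightarrow> nat" where
  "wedge_edges m1 v1 m2 v2 x y = (case (x, y) of
      (Inl a, Inl b) \<Rightarrow> m1 a b
    | (Inr a, Inr b) \<Rightarrow> (if a = v2 \<or> b = v2 then 0 else m2 a b)
    | (Inl a, Inr b) \<Rightarrow> (if a = v1 \<and> b \<noteq> v2 then m2 v2 b else 0)
    | (Inr a, Inl b) \<Rightarrow> (if b = v1 \<and> a \<noteq> v2 then m2 a v2 else 0))"

end

theory Submission
  imports Defs
begin


lemma lap_sum_zero: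
  assumes "finite V" "\<forall>x y. m x y = m y x"
  shows "(\<Sum>u\<in>V. laplacian V m f u) = 0"
proof -
  have "(\<Sum>u\<in>V. laplacian V m f u) = (\<Sum>u\<in>V. \<Sum>w\<in>V. int (m u w) * f u) - (\<Sum>u\<in>V. \<Sum>w\<in>V. int (m u w) * f w)"
    unfolding laplacian_def by (simp add: right_diff_distrib sum_subtractf)
  also have "(\<Sum>u\<in>V. \<Sum>w\<in>V. int (m u w) * f w) = (\<Sum>w\<in>V. \<Sum>u\<in>V. int (m u w) * f w)"
    by (rule sum.swap)
  also have "\<dots> = (\<Sum>u\<in>V. \<Sum>w\<in>V. int (m u w) * f u)"
    using assms(2) by simp
  finally show ?thesis by simp
qed

lemma winnable_deg:
  assumes "finite V" "\<forall>x y. m x y = m y x" "winnable V m D"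
  shows "deg V D \<ge> 0"
proof -
  obtain f where e: "effective V (\<lambda>u. D u - laplacian V m f u)"
    using assms(3) unfolding winnable_def lin_equiv_def by auto
  have "0 \<le> (\<Sum>u\<in>V. D u - laplacian V m f u)"
    using e unfolding effective_def by (intro sum_nonneg) auto
  also have "\<dots> = deg V D"
    using lap_sum_zero[OF assms(1,2)] by (simp add: sum_subtractf deg_def)
  finally show ?thesis .
qed

lemma winnable_mono:
  assumes "winnable V m X" "\<forall>x\<in>V. X x \<le> Y x"
  shows "winnable V m Y"
proof -
  obtain f where e: "effective V (\<lambda>u. X u - laplacian V m f u)"
    using assms(1) unfolding winnable_def lin_equiv_def by auto
  have "effective V (\<lambda>u. Y u - laplacian V m f u)"
    using e assms(2) unfolding effective_def by force
  thus ?thesis unfolding winnable_def lin_equiv_def by blast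
qed

definition Pr where
  "Pr V m D i \<longleftrightarrow> (\<forall>E. divisor V E \<and> effective V E \<and> deg V E = int i
                 \<longrightarrow> winnable V m (\<lambda>x. D x - E x))"

lemma deg_add_pt:
  assumes "finite V" "v \<in> V"
  shows "deg V (\<lambda>x. E x + (if x = v then k else 0)) = deg V E + k"
  using assms by (simp add: deg_def sum.distrib)

lemma Pr_down:
  assumes "finite V" "v0 \<in> V" "Pr V m D n" "i \<le> n"
  shows "Pr V m D i"
  unfolding Pr_def
proof (intro allI impI)
  fix E assume E: "divisor V E \<and> effective V E \<and> deg V E = int i"
  let ?E = "\<lambda>x. E x + (if x = v0 then int (n - i) else 0)"
  have "divisor V ?E" using E assms(2) unfolding divisor_def by auto
  moreover have "effective V ?E" using E unfolding effective_def by auto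
  moreover have "deg V ?E = int n" using E deg_add_pt[OF assms(1,2)] assms(4) by simp
  ultimately have "winnable V m (\<lambda>x. D x - ?E x)" using assms(3) unfolding Pr_def by blast
  thus "winnable V m (\<lambda>x. D x - E x)" by (rule winnable_mono) auto
qed

lemma Pr_winnable:
  assumes "finite V" "v0 \<in> V" "Pr V m D n"
  shows "winnable V m D"
proof -
  have "Pr V m D 0" using Pr_down[OF assms] by simp
  moreover have "divisor V (\<lambda>x. 0) \<and> effective V (\<lambda>x. 0) \<and> deg V (\<lambda>x. 0) = int 0"
    unfolding divisor_def effective_def deg_def by simp
  ultimately show ?thesis unfolding Pr_def by auto
qed

lemma Pr_bound:
  assumes "finite V" "v0 \<in> V" "\<forall>x y. m x y = m y x" "Pr V m D n"
  shows "int n \<le> deg V D"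
proof -
  let ?E = "\<lambda>x. 0 + (if x = v0 then int n else 0)"
  have "divisor V ?E \<and> effective V ?E \<and> deg V ?E = int n"
    using assms(2) deg_add_pt[OF assms(1,2), of "\<lambda>x. 0"] unfolding divisor_def effective_def
    by (auto simp: deg_def)
  hence "winnable V m (\<lambda>x. D x - ?E x)" using assms(4) unfolding Pr_def by blast
  hence "deg V (\<lambda>x. D x - ?E x) \<ge> 0" using winnable_deg assms by blast
  moreover have "deg V (\<lambda>x. D x - ?E x) = deg V D - int n"
    using assms(1,2) by (simp add: deg_def sum_subtractf)
  ultimately show ?thesis by simp
qed

lemma Pr_bound_nat:
  assumes "finite V" "v0 \<in> V" "\<forall>x y. m x y = m y x"
  shows "\<forall>y. Pr V m D y \<longrightarrow> y \<le> nat (deg V D)"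
  using Pr_bound[OF assms] by fastforce

lemma rank_Pr: "rank V m D = (if \<not> winnable V m D then -1 else int (GREATEST r. Pr V m D r))"
  unfolding rank_def Pr_def by (rule refl)

lemma rank_ge_iff:
  assumes "finite V" "v0 \<in> V" "\<forall>x y. m x y = m y x"
  shows "int i \<le> rank V m D \<longleftrightarrow> Pr V m D i"
proof
  assume pi: "Pr V m D i"
  hence w: "winnable V m D" using Pr_winnable[OF assms(1,2)] by blast
  have "i \<le> (GREATEST r. Pr V m D r)"
    using Greatest_le_nat[of "Pr V m D" i "nat (deg V D)"] pi Pr_bound_nat[OF assms] by blast
  thus "int i \<le> rank V m D" using w by (simp add: rank_Pr)
next
  assume a: "int i \<le> rank V m D"
  hence w: "winnable V m D" by (simp add: rank_Pr split: if_splits)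
  have p0: "Pr V m D 0"
    unfolding Pr_def
  proof (intro allI impI)
    fix E assume E: "divisor V E \<and> effective V E \<and> deg V E = int 0"
    have "\<forall>x\<in>V. E x = 0"
    proof -
      have "(\<Sum>x\<in>V. E x) = 0" "\<forall>x\<in>V. E x \<ge> 0" using E unfolding deg_def effective_def by auto
      thus ?thesis using sum_nonneg_eq_0_iff[OF assms(1)] by blast
    qed
    thus "winnable V m (\<lambda>x. D x - E x)" using w by (elim winnable_mono) auto
  qed
  have "Pr V m D (GREATEST r. Pr V m D r)"
    using GreatestI_nat[of "Pr V m D" 0 "nat (deg V D)"] p0 Pr_bound_nat[OF assms] by blast
  moreover have "i \<le> (GREATEST r. Pr V m D r)"
    using a w by (simp add: rank_Pr)
  ultimately show "Pr V m D i" using Pr_down[OF assms(1,2)] by blast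
qed



lemma wedge_sym:
  assumes "\<forall>x y. m1 x y = m1 y x" "\<forall>x y. m2 x y = m2 y x"
  shows "\<forall>x y. wedge_edges m1 v1 m2 v2 x y = wedge_edges m1 v1 m2 v2 y x"
  using assms unfolding wedge_edges_def by (auto split: sum.splits)

lemma sum_wedge:
  assumes "finite V1" "finite V2"
  shows "(\<Sum>x\<in>wedge_vertices V1 v1 V2 v2. h x) = (\<Sum>a\<in>V1. h (Inl a)) + (\<Sum>b\<in>V2-{v2}. h (Inr b))"
proof -
  have "(\<Sum>x\<in>wedge_vertices V1 v1 V2 v2. h x) = (\<Sum>x\<in>Inl ` V1. h x) + (\<Sum>x\<in>Inr ` (V2 - {v2}). h x)"
    unfolding wedge_vertices_def using assms by (intro sum.union_disjoint) auto
  also have "\<dots> = (\<Sum>a\<in>V1. h (Inl a)) + (\<Sum>b\<in>V2-{v2}. h (Inr b))"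
    by (simp add: sum.reindex)
  finally show ?thesis .
qed

definition f1of :: "('a + 'b \<Rightarrow> int) \<Rightarrow> 'a \<Rightarrow> int" where
  "f1of f a = f (Inl a)"
definition f2of :: "'a \<Rightarrow> 'b \<Rightarrow> ('a + 'b \<Rightarrow> int) \<Rightarrow> 'b \<Rightarrow> int" where
  "f2of v1 v2 f b = (if b = v2 then f (Inl v1) else f (Inr b))"

lemma lap_v2:
  assumes "finite V2" "v2 \<in> V2" "\<forall>x. m2 x x = 0"
  shows "laplacian V2 m2 (f2of v1 v2 f) v2 = (\<Sum>b\<in>V2-{v2}. int (m2 v2 b) * (f (Inl v1) - f (Inr b)))"
proof -
  have "laplacian V2 m2 (f2of v1 v2 f) v2 = int (m2 v2 v2) * 0 + (\<Sum>b\<in>V2-{v2}. int (m2 v2 b) * (f2of v1 v2 f v2 - f2of v1 v2 f b))"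
    unfolding laplacian_def using assms by (simp add: sum.remove)
  thus ?thesis using assms(3) by (simp add: f2of_def)
qed

lemma wedge_lap_Inl:
  assumes "finite V1" "finite V2" "v1 \<in> V1" "v2 \<in> V2" "\<forall>x. m2 x x = 0"
  shows "laplacian (wedge_vertices V1 v1 V2 v2) (wedge_edges m1 v1 m2 v2) f (Inl a)
       = laplacian V1 m1 (f1of f) a + (if a = v1 then laplacian V2 m2 (f2of v1 v2 f) v2 else 0)"
proof -
  have "laplacian (wedge_vertices V1 v1 V2 v2) (wedge_edges m1 v1 m2 v2) f (Inl a)
    = (\<Sum>b\<in>V1. int (m1 a b) * (f (Inl a) - f (Inl b)))
      + (\<Sum>b\<in>V2-{v2}. int (if a = v1 then m2 v2 b else 0) * (f (Inl a) - f (Inr b)))"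
    unfolding laplacian_def sum_wedge[OF assms(1,2)] by (simp add: wedge_edges_def)
  also have "\<dots> = laplacian V1 m1 (f1of f) a + (if a = v1 then laplacian V2 m2 (f2of v1 v2 f) v2 else 0)"
    using lap_v2[of V2 v2 m2 v1 f, OF assms(2,4,5)] by (simp add: laplacian_def f1of_def)
  finally show ?thesis .
qed

lemma wedge_lap_Inr:
  assumes "finite V1" "finite V2" "v1 \<in> V1" "v2 \<in> V2" "b \<noteq> v2"
  shows "laplacian (wedge_vertices V1 v1 V2 v2) (wedge_edges m1 v1 m2 v2) f (Inr b)
       = laplacian V2 m2 (f2of v1 v2 f) b"
proof -
  have "laplacian (wedge_vertices V1 v1 V2 v2) (wedge_edges m1 v1 m2 v2) f (Inr b)
    = (\<Sum>a\<in>V1. int (if a = v1 then m2 b v2 else 0) * (f (Inr b) - f (Inl a)))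
      + (\<Sum>c\<in>V2-{v2}. int (m2 b c) * (f (Inr b) - f (Inr c)))"
    unfolding laplacian_def sum_wedge[OF assms(1,2)] using assms(5) by (simp add: wedge_edges_def)
  also have "(\<Sum>a\<in>V1. int (if a = v1 then m2 b v2 else 0) * (f (Inr b) - f (Inl a)))
      = int (m2 b v2) * (f (Inr b) - f (Inl v1))"
  proof -
    have "(\<Sum>a\<in>V1. int (if a = v1 then m2 b v2 else 0) * (f (Inr b) - f (Inl a)))
        = (\<Sum>a\<in>V1. if a = v1 then int (m2 b v2) * (f (Inr b) - f (Inl a)) else 0)"
      by (rule sum.cong) auto
    thus ?thesis using assms(1,3) by simp
  qed
  also have "int (m2 b v2) * (f (Inr b) - f (Inl v1)) + (\<Sum>c\<in>V2-{v2}. int (m2 b c) * (f (Inr b) - f (Inr c)))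
     = laplacian V2 m2 (f2of v1 v2 f) b"
    unfolding laplacian_def using assms(2,4,5)
    by (simp add: sum.remove f2of_def)
  finally show ?thesis .
qed



definition wdiv :: "'a \<Rightarrow> 'b \<Rightarrow> ('a \<Rightarrow> int) \<Rightarrow> ('b \<Rightarrow> int) \<Rightarrow> 'a + 'b \<Rightarrow> int" where
  "wdiv v1 v2 A B x = (case x of Inl a \<Rightarrow> A a + (if a = v1 then B v2 else 0)
                                | Inr b \<Rightarrow> (if b = v2 then 0 else B b))"

lemma split_winnable:
  assumes "finite V1" "finite V2" "v1 \<in> V1" "v2 \<in> V2" "\<forall>x. m2 x x = 0"
    and "winnable (wedge_vertices V1 v1 V2 v2) (wedge_edges m1 v1 m2 v2) (wdiv v1 v2 A B)"
  shows "\<exists>c1 c2. 0 \<le> c1 + c2 \<and> winnable V1 m1 (\<lambda>x. A x - (if x = v1 then c1 else 0))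
                  \<and> winnable V2 m2 (\<lambda>x. B x - (if x = v2 then c2 else 0))"
proof -
  let ?W = "wedge_vertices V1 v1 V2 v2" and ?w = "wedge_edges m1 v1 m2 v2"
  obtain f where e: "effective ?W (\<lambda>u. wdiv v1 v2 A B u - laplacian ?W ?w f u)"
    using assms(6) unfolding winnable_def lin_equiv_def by auto
  define L1 where "L1 = laplacian V1 m1 (f1of f)"
  define L2 where "L2 = laplacian V2 m2 (f2of v1 v2 f)"
  define c1 where "c1 = A v1 - L1 v1"
  define c2 where "c2 = B v2 - L2 v2"
  have eW: "\<And>u. u \<in> ?W \<Longrightarrow> 0 \<le> wdiv v1 v2 A B u - laplacian ?W ?w f u"
    using e unfolding effective_def by blast
  have "Inl v1 \<in> ?W" using assms(3) unfolding wedge_vertices_def by blast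
  from eW[OF this] have "0 \<le> c1 + c2"
    unfolding c1_def c2_def L1_def L2_def
    using wedge_lap_Inl[of V1 V2 v1 v2 m2 m1 f v1, OF assms(1-5)] by (simp add: wdiv_def)
  moreover have "winnable V1 m1 (\<lambda>x. A x - (if x = v1 then c1 else 0))"
  proof -
    have "effective V1 (\<lambda>u. (A u - (if u = v1 then c1 else 0)) - L1 u)"
      unfolding effective_def
    proof
      fix a assume a: "a \<in> V1"
      show "0 \<le> A a - (if a = v1 then c1 else 0) - L1 a"
      proof (cases "a = v1")
        case True thus ?thesis by (simp add: c1_def)
      next
        case False
        have "Inl a \<in> ?W" using a unfolding wedge_vertices_def by blast
        from eW[OF this] show ?thesis
          using False wedge_lap_Inl[of V1 V2 v1 v2 m2 m1 f a, OF assms(1-5)] by (simp add: wdiv_def L1_def)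
      qed
    qed
    thus ?thesis unfolding winnable_def lin_equiv_def L1_def by blast
  qed
  moreover have "winnable V2 m2 (\<lambda>x. B x - (if x = v2 then c2 else 0))"
  proof -
    have "effective V2 (\<lambda>u. (B u - (if u = v2 then c2 else 0)) - L2 u)"
      unfolding effective_def
    proof
      fix b assume b: "b \<in> V2"
      show "0 \<le> B b - (if b = v2 then c2 else 0) - L2 b"
      proof (cases "b = v2")
        case True thus ?thesis by (simp add: c2_def)
      next
        case False
        have "Inr b \<in> ?W" using b False unfolding wedge_vertices_def by blast
        from eW[OF this] show ?thesis
          using False wedge_lap_Inr[of V1 V2 v1 v2 b m1 m2 f, OF assms(1-4) False] by (simp add: wdiv_def L2_def)
      qed
    qed
    thus ?thesis unfolding winnable_def lin_equiv_def L2_def by blast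
  qed
  ultimately show ?thesis by blast
qed



lemma wdiv_diff:
  "wdiv v1 v2 (\<lambda>x. A x - E1 x) (\<lambda>x. B x - E2 x) = (\<lambda>x. wdiv v1 v2 A B x - wdiv v1 v2 E1 E2 x)"
  by (rule ext) (auto simp: wdiv_def split: sum.splits)

lemma wdiv_divisor:
  assumes "divisor V1 A" "divisor V2 B" "v1 \<in> V1"
  shows "divisor (wedge_vertices V1 v1 V2 v2) (wdiv v1 v2 A B)"
  using assms unfolding divisor_def wedge_vertices_def wdiv_def
  by (auto split: sum.splits)

lemma wdiv_effective:
  assumes "effective V1 A" "effective V2 B" "v2 \<in> V2"
  shows "effective (wedge_vertices V1 v1 V2 v2) (wdiv v1 v2 A B)"
  using assms unfolding effective_def wedge_vertices_def wdiv_def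
  by (auto split: sum.splits)

lemma wdiv_deg:
  assumes "finite V1" "finite V2" "v2 \<in> V2" "v1 \<in> V1"
  shows "deg (wedge_vertices V1 v1 V2 v2) (wdiv v1 v2 A B) = deg V1 A + deg V2 B"
proof -
  have "deg (wedge_vertices V1 v1 V2 v2) (wdiv v1 v2 A B)
      = (\<Sum>a\<in>V1. A a + (if a = v1 then B v2 else 0)) + (\<Sum>b\<in>V2-{v2}. B b)"
    unfolding deg_def sum_wedge[OF assms(1,2)] by (simp add: wdiv_def)
  also have "\<dots> = deg V1 A + (B v2 + (\<Sum>b\<in>V2-{v2}. B b))"
    using assms by (simp add: sum.distrib deg_def)
  also have "B v2 + (\<Sum>b\<in>V2-{v2}. B b) = deg V2 B"
    using assms by (simp add: deg_def sum.remove)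
  finally show ?thesis .
qed



lemma double_sum_even:
  assumes "finite V" "\<forall>x y. m x y = m y x" "\<forall>x. m x x = 0"
  shows "even (\<Sum>x\<in>V. \<Sum>y\<in>V. (m x y :: nat))"
  using assms(1)
proof (induction V rule: finite_induct)
  case empty thus ?case by simp
next
  case (insert a F)
  have "(\<Sum>x\<in>insert a F. \<Sum>y\<in>insert a F. m x y)
      = (m a a + (\<Sum>y\<in>F. m a y)) + (\<Sum>x\<in>F. m x a + (\<Sum>y\<in>F. m x y))"
    using insert by simp
  also have "\<dots> = 2 * (\<Sum>y\<in>F. m a y) + (\<Sum>x\<in>F. \<Sum>y\<in>F. m x y)"
    using assms(2,3) by (simp add: sum.distrib)
  finally have "(\<Sum>x\<in>insert a F. \<Sum>y\<in>insert a F. m x y) = 2 * (\<Sum>y\<in>F. m a y) + (\<Sum>x\<in>F. \<Sum>y\<in>F. m x y)" .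
  thus ?case using insert.IH by simp
qed

lemma wedge_edge_sum:
  assumes "finite V1" "finite V2" "v1 \<in> V1" "v2 \<in> V2" "\<forall>x. m2 x x = 0"
  shows "(\<Sum>x\<in>wedge_vertices V1 v1 V2 v2. \<Sum>y\<in>wedge_vertices V1 v1 V2 v2. wedge_edges m1 v1 m2 v2 x y)
     = (\<Sum>a\<in>V1. \<Sum>b\<in>V1. m1 a b) + (\<Sum>a\<in>V2. \<Sum>b\<in>V2. m2 a b)"
proof -
  have "(\<Sum>x\<in>wedge_vertices V1 v1 V2 v2. \<Sum>y\<in>wedge_vertices V1 v1 V2 v2. wedge_edges m1 v1 m2 v2 x y)
    = (\<Sum>a\<in>V1. (\<Sum>b\<in>V1. m1 a b) + (\<Sum>b\<in>V2-{v2}. if a = v1 then m2 v2 b else 0))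
      + (\<Sum>b\<in>V2-{v2}. (\<Sum>a\<in>V1. if a = v1 then m2 b v2 else 0) + (\<Sum>c\<in>V2-{v2}. m2 b c))"
    unfolding sum_wedge[OF assms(1,2)]
    by (simp add: wedge_edges_def)
  also have "\<dots> = (\<Sum>a\<in>V1. \<Sum>b\<in>V1. m1 a b) + (\<Sum>b\<in>V2-{v2}. m2 v2 b)
      + (\<Sum>b\<in>V2-{v2}. m2 b v2 + (\<Sum>c\<in>V2-{v2}. m2 b c))"
  proof -
    have e1: "(\<Sum>a\<in>V1. (\<Sum>b\<in>V2-{v2}. if a = v1 then m2 v2 b else 0)) = (\<Sum>b\<in>V2-{v2}. m2 v2 b)"
    proof -
      have "(\<Sum>a\<in>V1. (\<Sum>b\<in>V2-{v2}. if a = v1 then m2 v2 b else 0))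
          = (\<Sum>a\<in>V1. if a = v1 then (\<Sum>b\<in>V2-{v2}. m2 v2 b) else 0)"
        by (rule sum.cong) auto
      thus ?thesis using assms(1,3) by simp
    qed
    have e2: "\<And>b. (\<Sum>a\<in>V1. if a = v1 then m2 b v2 else 0) = m2 b v2"
      using assms(1,3) by simp
    show ?thesis by (simp add: sum.distrib e1 e2)
  qed
  also have "\<dots> = (\<Sum>a\<in>V1. \<Sum>b\<in>V1. m1 a b) + (\<Sum>a\<in>V2. \<Sum>b\<in>V2. m2 a b)"
  proof -
    have "(\<Sum>a\<in>V2. \<Sum>b\<in>V2. m2 a b) = (\<Sum>b\<in>V2. m2 v2 b) + (\<Sum>a\<in>V2-{v2}. \<Sum>b\<in>V2. m2 a b)"
      by (rule sum.remove[OF assms(2,4)])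
    also have "(\<Sum>b\<in>V2. m2 v2 b) = (\<Sum>b\<in>V2-{v2}. m2 v2 b)"
      using assms by (simp add: sum.remove[OF assms(2,4)])
    also have "(\<Sum>a\<in>V2-{v2}. \<Sum>b\<in>V2. m2 a b) = (\<Sum>b\<in>V2-{v2}. m2 b v2 + (\<Sum>c\<in>V2-{v2}. m2 b c))"
      by (intro sum.cong) (simp_all add: sum.remove[OF assms(2,4)])
    finally show ?thesis by simp
  qed
  finally show ?thesis .
qed

lemma wedge_card:
  assumes "finite V1" "finite V2" "v2 \<in> V2"
  shows "card (wedge_vertices V1 v1 V2 v2) = card V1 + (card V2 - 1)"
proof -
  have "card (wedge_vertices V1 v1 V2 v2) = card (Inl ` V1 :: ('a+'b) set) + card (Inr ` (V2 - {v2}) :: ('a+'b) set)"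
    unfolding wedge_vertices_def using assms by (intro card_Un_disjoint) auto
  thus ?thesis using assms by (simp add: card_image)
qed

lemma wedge_genus:
  assumes "is_graph V1 m1" "is_graph V2 m2" "v1 \<in> V1" "v2 \<in> V2"
  shows "genus (wedge_vertices V1 v1 V2 v2) (wedge_edges m1 v1 m2 v2) = genus V1 m1 + genus V2 m2"
proof -
  have f: "finite V1" "finite V2" and s: "\<forall>x y. m1 x y = m1 y x" "\<forall>x y. m2 x y = m2 y x"
    and d: "\<forall>x. m1 x x = 0" "\<forall>x. m2 x x = 0"
    using assms(1,2) unfolding is_graph_def by auto
  have ev1: "even (\<Sum>a\<in>V1. \<Sum>b\<in>V1. m1 a b)" by (rule double_sum_even[OF f(1) s(1) d(1)])
  have ev2: "even (\<Sum>a\<in>V2. \<Sum>b\<in>V2. m2 a b)" by (rule double_sum_even[OF f(2) s(2) d(2)])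
  have ne: "num_edges (wedge_vertices V1 v1 V2 v2) (wedge_edges m1 v1 m2 v2) = num_edges V1 m1 + num_edges V2 m2"
    unfolding num_edges_def wedge_edge_sum[of V1 V2 v1 v2 m2 m1, OF f assms(3,4) d(2)] using ev1 ev2 by (auto elim!: evenE)
  have c2: "card V2 \<ge> 1" using f(2) assms(4) by (metis One_nat_def Suc_leI card_gt_0_iff empty_iff)
  show ?thesis unfolding genus_def ne wedge_card[OF f assms(4)] using c2 by simp
qed



lemma key_X:
  fixes A :: "'a \<Rightarrow> int" and B :: "'b \<Rightarrow> int"
  assumes f: "finite V1" "finite V2" and v: "v1 \<in> V1" "v2 \<in> V2"
    and s: "\<forall>x y. m1 x y = m1 y x" "\<forall>x y. m2 x y = m2 y x" and d: "\<forall>x. m2 x x = 0"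
    and PW: "Pr (wedge_vertices V1 v1 V2 v2) (wedge_edges m1 v1 m2 v2) (wdiv v1 v2 A B) (e1 + e2)"
    and nr: "\<not> (int e1 \<le> rank V1 m1 (\<lambda>x. A x + (if x = v1 then l else 0)))"
  shows "int e2 \<le> rank V2 m2 (\<lambda>x. B x + (if x = v2 then -(l+1) else 0))"
proof -
  have "\<not> Pr V1 m1 (\<lambda>x. A x + (if x = v1 then l else 0)) e1"
    using nr rank_ge_iff[OF f(1) v(1) s(1)] by blast
  then obtain E1 where E1: "divisor V1 E1" "effective V1 E1" "deg V1 E1 = int e1"
    and nw: "\<not> winnable V1 m1 (\<lambda>x. (A x + (if x = v1 then l else 0)) - E1 x)"
    unfolding Pr_def by blast
  have "Pr V2 m2 (\<lambda>x. B x + (if x = v2 then -(l+1) else 0)) e2"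
    unfolding Pr_def
  proof (intro allI impI)
    fix E2 assume E2: "divisor V2 E2 \<and> effective V2 E2 \<and> deg V2 E2 = int e2"
    have "divisor (wedge_vertices V1 v1 V2 v2) (wdiv v1 v2 E1 E2)"
      by (rule wdiv_divisor[OF E1(1) _ v(1)]) (use E2 in simp)
    moreover have "effective (wedge_vertices V1 v1 V2 v2) (wdiv v1 v2 E1 E2)"
      by (rule wdiv_effective[OF E1(2) _ v(2)]) (use E2 in simp)
    moreover have "deg (wedge_vertices V1 v1 V2 v2) (wdiv v1 v2 E1 E2) = int (e1 + e2)"
      using wdiv_deg[OF f v(2,1)] E1 E2 by simp
    ultimately have "winnable (wedge_vertices V1 v1 V2 v2) (wedge_edges m1 v1 m2 v2)
        (\<lambda>x. wdiv v1 v2 A B x - wdiv v1 v2 E1 E2 x)"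
      using PW unfolding Pr_def by blast
    hence "winnable (wedge_vertices V1 v1 V2 v2) (wedge_edges m1 v1 m2 v2)
        (wdiv v1 v2 (\<lambda>x. A x - E1 x) (\<lambda>x. B x - E2 x))"
      by (simp add: wdiv_diff)
    from split_winnable[OF f v d this] obtain c1 c2 where
      c: "0 \<le> c1 + c2" and w1: "winnable V1 m1 (\<lambda>x. (A x - E1 x) - (if x = v1 then c1 else 0))"
      and w2: "winnable V2 m2 (\<lambda>x. (B x - E2 x) - (if x = v2 then c2 else 0))"
      by blast
    have "l < - c1"
    proof (rule ccontr)
      assume "\<not> l < - c1"
      hence "winnable V1 m1 (\<lambda>x. (A x + (if x = v1 then l else 0)) - E1 x)"
        using w1 by (elim winnable_mono) auto
      thus False using nw by blast
    qed
    hence "l + 1 \<le> c2" using c by simp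
    thus "winnable V2 m2 (\<lambda>x. (B x + (if x = v2 then -(l+1) else 0)) - E2 x)"
      using w2 by (elim winnable_mono) auto
  qed
  thus ?thesis using rank_ge_iff[OF f(2) v(2) s(2)] by blast
qed

lemma rank_lower:
  assumes "finite V" "v \<in> V" "\<forall>x y. m x y = m y x"
    and "int i \<le> rank V m (\<lambda>x. A x + (if x = v then l else 0))"
  shows "- deg V A \<le> l"
proof -
  have "winnable V m (\<lambda>x. A x + (if x = v then l else 0))"
    using assms(4) by (simp add: rank_Pr split: if_splits)
  hence "0 \<le> deg V (\<lambda>x. A x + (if x = v then l else 0))"
    using winnable_deg[OF assms(1,3)] by blast
  thus ?thesis using deg_add_pt[OF assms(1,2)] by simp
qed

lemma least_int:
  fixes P :: "int \<Rightarrow> bool"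
  assumes "P x0" "\<forall>x. P x \<longrightarrow> b \<le> x"
  shows "P (LEAST x. P x) \<and> (\<forall>y. P y \<longrightarrow> (LEAST x. P x) \<le> y)"
proof -
  define n where "n = (LEAST n::nat. P (b + int n))"
  have "P (b + int (nat (x0 - b)))" using assms by simp
  hence Pn: "P (b + int n)" unfolding n_def by (rule LeastI)
  have mn: "\<forall>y. P y \<longrightarrow> b + int n \<le> y"
  proof (intro allI impI)
    fix y assume "P y"
    hence "P (b + int (nat (y - b)))" using assms by simp
    hence "n \<le> nat (y - b)" unfolding n_def by (rule Least_le)
    moreover have "b \<le> y" using assms(2) \<open>P y\<close> by blast
    ultimately show "b + int n \<le> y" by linarith
  qed
  have "(LEAST x. P x) = b + int n"
    by (rule Least_equality) (use Pn mn in auto)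
  thus ?thesis using Pn mn by simp
qed

lemma key:
  fixes A :: "'a \<Rightarrow> int" and B :: "'b \<Rightarrow> int"
  assumes f: "finite V1" "finite V2" and v: "v1 \<in> V1" "v2 \<in> V2"
    and s: "\<forall>x y. m1 x y = m1 y x" "\<forall>x y. m2 x y = m2 y x" and d: "\<forall>x. m2 x x = 0"
    and PW: "Pr (wedge_vertices V1 v1 V2 v2) (wedge_edges m1 v1 m2 v2) (wdiv v1 v2 A B) (e1 + e2)"
  shows "s_idx V1 m1 A v1 e1 + s_idx V2 m2 B v2 e2 \<le> 0"
proof -
  define P1 where "P1 l = (int e1 \<le> rank V1 m1 (\<lambda>x. A x + (if x = v1 then l else 0)))" for l
  define P2 where "P2 l = (int e2 \<le> rank V2 m2 (\<lambda>x. B x + (if x = v2 then l else 0)))" for l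
  have X: "\<And>l. \<not> P1 l \<Longrightarrow> P2 (-(l+1))"
    unfolding P1_def P2_def using key_X[OF f v s d PW] by blast
  have b1: "\<forall>x. P1 x \<longrightarrow> - deg V1 A \<le> x" unfolding P1_def using rank_lower[OF f(1) v(1) s(1)] by blast
  have b2: "\<forall>x. P2 x \<longrightarrow> - deg V2 B \<le> x" unfolding P2_def using rank_lower[OF f(2) v(2) s(2)] by blast
  have "\<exists>x0. P1 x0"
  proof (rule ccontr)
    assume "\<not> (\<exists>x0. P1 x0)"
    hence "P2 (-(deg V2 B + 1))" using X by blast
    thus False using b2 by fastforce
  qed
  then obtain x0 where "P1 x0" by blast
  from least_int[OF this b1] have L1: "P1 (LEAST x. P1 x)" "\<forall>y. P1 y \<longrightarrow> (LEAST x. P1 x) \<le> y" by auto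
  have "\<not> P1 ((LEAST x. P1 x) - 1)" using L1(2) by fastforce
  hence p2: "P2 (- (LEAST x. P1 x))" using X by fastforce
  from least_int[OF p2 b2] have "(LEAST x. P2 x) \<le> - (LEAST x. P1 x)" using p2 by blast
  moreover have "s_idx V1 m1 A v1 e1 = (LEAST x. P1 x)" unfolding s_idx_def P1_def by simp
  moreover have "s_idx V2 m2 B v2 e2 = (LEAST x. P2 x)" unfolding s_idx_def P2_def by simp
  ultimately show ?thesis by simp
qed



theorem mainTheorem10:
  fixes V1 :: "'a set" and m1 :: "'a \<Rightarrow> 'a \<Rightarrow> nat" and v1 :: 'a
    and V2 :: "'b set" and m2 :: "'b \<Rightarrow> 'b \<Rightarrow> nat" and v2 :: 'b
  assumes "is_graph V1 m1" and "is_graph V2 m2"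
    and "v1 \<in> V1" and "v2 \<in> V2"
    and "marked_BN_general V1 m1 v1" and "marked_BN_general V2 m2 v2"
  shows "BN_general (wedge_vertices V1 v1 V2 v2) (wedge_edges m1 v1 m2 v2)"
proof -
  let ?W = "wedge_vertices V1 v1 V2 v2" and ?w = "wedge_edges m1 v1 m2 v2"
  have f: "finite V1" "finite V2" and s: "\<forall>x y. m1 x y = m1 y x" "\<forall>x y. m2 x y = m2 y x"
    and d: "\<forall>x. m2 x x = 0"
    using assms(1,2) unfolding is_graph_def by auto
  have v: "v1 \<in> V1" "v2 \<in> V2" by (rule assms(3), rule assms(4))
  have fW: "finite ?W" unfolding wedge_vertices_def using f by simp
  have vW: "Inl v1 \<in> ?W" unfolding wedge_vertices_def using v by simp
  have sW: "\<forall>x y. ?w x y = ?w y x" by (rule wedge_sym[OF s])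
  have gW: "genus ?W ?w = genus V1 m1 + genus V2 m2" by (rule wedge_genus[OF assms(1-4)])
  show ?thesis
    unfolding BN_general_def
  proof (intro allI impI, elim conjE)
    fix D r
    assume dD: "divisor ?W D" and r0: "0 \<le> r" and rr: "r \<le> rank ?W ?w D"
    define n where "n = nat r"
    have rn: "r = int n" using r0 unfolding n_def by simp
    define A where "A a = (if a \<in> V1 then D (Inl a) else 0)" for a
    define B where "B b = (if b \<in> V2 \<and> b \<noteq> v2 then D (Inr b) else 0)" for b
    have dA: "divisor V1 A" unfolding divisor_def A_def by simp
    have dB: "divisor V2 B" unfolding divisor_def B_def by simp
    have hD: "\<forall>x\<in>?W. D x = wdiv v1 v2 A B x"
      unfolding wedge_vertices_def wdiv_def A_def B_def by (auto split: if_splits)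
    have degD: "deg ?W D = deg V1 A + deg V2 B"
    proof -
      have "deg ?W D = deg ?W (wdiv v1 v2 A B)" unfolding deg_def using hD by (intro sum.cong) auto
      thus ?thesis using wdiv_deg[OF f v(2,1)] by simp
    qed
    have PD: "Pr ?W ?w D n" using rr rn rank_ge_iff[OF fW vW sW] by simp
    have PA: "Pr ?W ?w (wdiv v1 v2 A B) n"
      unfolding Pr_def
    proof (intro allI impI)
      fix E assume E: "divisor ?W E \<and> effective ?W E \<and> deg ?W E = int n"
      hence "winnable ?W ?w (\<lambda>x. D x - E x)" using PD unfolding Pr_def by blast
      thus "winnable ?W ?w (\<lambda>x. wdiv v1 v2 A B x - E x)"
        by (rule winnable_mono) (use hD in auto)
    qed
    define lA where "lA i = lambda_idx V1 m1 A v1 i" for i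
    define lB where "lB i = lambda_idx V2 m2 B v2 i" for i
    let ?k = "int n + genus V1 m1 + genus V2 m2 - deg V1 A - deg V2 B"
    have each: "?k \<le> lA i + lB (n - i)" if "i < Suc n" for i
    proof -
      have "Pr ?W ?w (wdiv v1 v2 A B) (i + (n - i))" using PA that by simp
      from key[OF f v s d this] have "s_idx V1 m1 A v1 i + s_idx V2 m2 B v2 (n - i) \<le> 0" .
      thus ?thesis using that unfolding lA_def lB_def lambda_idx_def by simp
    qed
    have "(\<Sum>i<Suc n. ?k) \<le> (\<Sum>i<Suc n. lA i + lB (n - i))"
      by (rule sum_mono) (use each in auto)
    also have "\<dots> = (\<Sum>i<Suc n. lA i) + (\<Sum>i<Suc n. lB i)"
    proof -
      have "(\<Sum>i<Suc n. lB (n - i)) = (\<Sum>i<Suc n. lB i)"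
        using sum.nat_diff_reindex[of "lB" "Suc n"] by simp
      thus ?thesis by (simp add: sum.distrib)
    qed
    also have "\<dots> \<le> genus V1 m1 + genus V2 m2"
      using assms(5,6) dA dB unfolding marked_BN_general_def lA_def lB_def
      by (meson add_mono)
    finally have "(int n + 1) * ?k \<le> genus V1 m1 + genus V2 m2" by (simp add: add.commute)
    thus "0 \<le> genus ?W ?w - (r + 1) * (genus ?W ?w - deg ?W D + r)"
      unfolding gW degD rn by (simp add: algebra_simps)
  qed
qed

end
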